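(* Let $X$, $Y$ be disjoint countable sets of cardinality at least two, and let $M\le\mathrm{Sym}(X)$ and $N\le\mathrm{Sym}(Y)$ be nontrivial closed permutation groups. Then either $|M\boxtimes N|\le\aleph_0$ or $|M\boxtimes N| = 2^{\aleph_0}$, with the former holding if and only if $M$ and $N$ are semi-regular.
   Context: Closed means closed in the permutation topology (pointwise convergence) of $\mathrm{Sym}(X)$, resp. $\mathrm{Sym}(Y)$. A permutation group is semi-regular if all point stabilisers are trivial. Let $T$ be the $(|X|,|Y|)$-biregular tree with natural bipartition $VT=V_X\sqcup V_Y$ (vertices in $V_X$ have valency $|X|$, in $V_Y$ valency $|Y|$). $A(v)$, $\overline{A}(v)$ are the sets of arcs with origin, resp. terminus, $v$. A legal colouring is a map $c:AT\to X\cup Y$ restricting to a bijection $A(v)\to X$ for $v\in V_X$, to a bijection $A(v)\to Y$ for $v\in V_Y$, and constant on each $\overline{A}(v)$. $U_c(M,N)$ is the group of $g\in\mathrm{Aut}(T)$ with $gV_X=V_X$ and $c|_{A(gv)}\circ g|_{A(v)}\circ(c|_{A(v)})^{-1}$ in $M$ for $v\in V_X$ and in $N$ for $v\in V_Y$. The box product $M\boxtimes N\le\mathrm{Sym}(V_Y)$ is the group induced on $V_Y$ by $U_c(M,N)$. *)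

theory Defs
  imports "HOL-Combinatorics.Permutations" "HOL-Library.Equipollence" "HOL-Library.Countable_Set"
begin

text \<open>Elements of Sym(X) are represented as permutations of the ambient type fixing
  everything outside X (i.e. f permutes X).\<close>

definition perm_group :: "('a \<Rightarrow> 'a) set \<Rightarrow> 'a set \<Rightarrow> bool" where
  "perm_group M X \<longleftrightarrow> M \<subseteq> {f. f permutes X} \<and> id \<in> M \<and>
     (\<forall>f\<in>M. \<forall>g\<in>M. f \<circ> g \<in> M) \<and> (\<forall>f\<in>M. inv f \<in> M)"

text \<open>Closed in the permutation topology (pointwise convergence) of Sym(X).\<close>
definition closed_perm_group :: "('a \<Rightarrow> 'a) set \<Rightarrow> 'a set \<Rightarrow> bool" where
  "closed_perm_group M X \<longleftrightarrow> perm_group M X \<and>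
     (\<forall>g. g permutes X \<longrightarrow>
        (\<forall>F. finite F \<and> F \<subseteq> X \<longrightarrow> (\<exists>m\<in>M. \<forall>x\<in>F. m x = g x)) \<longrightarrow> g \<in> M)"

definition nontrivial_group :: "('a \<Rightarrow> 'a) set \<Rightarrow> bool" where
  "nontrivial_group M \<longleftrightarrow> M \<noteq> {id}"

definition semi_regular :: "('a \<Rightarrow> 'a) set \<Rightarrow> 'a set \<Rightarrow> bool" where
  "semi_regular M X \<longleftrightarrow> (\<forall>m\<in>M. \<forall>x\<in>X. m x = x \<longrightarrow> m = id)"

definition graph :: "'v set \<Rightarrow> ('v \<Rightarrow> 'v \<Rightarrow> bool) \<Rightarrow> bool" where
  "graph V adj \<longleftrightarrow> (\<forall>u w. adj u w \<longrightarrow> u \<in> V \<and> w \<in> V \<and> adj w u \<and> u \<noteq> w)"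

definition reduced_path :: "('v \<Rightarrow> 'v \<Rightarrow> bool) \<Rightarrow> 'v list \<Rightarrow> 'v \<Rightarrow> 'v \<Rightarrow> bool" where
  "reduced_path adj p u w \<longleftrightarrow> p \<noteq> [] \<and> hd p = u \<and> last p = w \<and>
     (\<forall>i. Suc i < length p \<longrightarrow> adj (p ! i) (p ! Suc i)) \<and>
     (\<forall>i. Suc (Suc i) < length p \<longrightarrow> p ! i \<noteq> p ! Suc (Suc i))"

definition tree :: "'v set \<Rightarrow> ('v \<Rightarrow> 'v \<Rightarrow> bool) \<Rightarrow> bool" where
  "tree V adj \<longleftrightarrow> V \<noteq> {} \<and> graph V adj \<and> (\<forall>u\<in>V. \<forall>w\<in>V. \<exists>!p. reduced_path adj p u w)"

definition arcs :: "('v \<Rightarrow> 'v \<Rightarrow> bool) \<Rightarrow> ('v \<times> 'v) set" where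
  "arcs adj = {(u, w). adj u w}"

definition out_arcs :: "('v \<Rightarrow> 'v \<Rightarrow> bool) \<Rightarrow> 'v \<Rightarrow> ('v \<times> 'v) set" where
  "out_arcs adj v = {(v, w) | w. adj v w}"

definition in_arcs :: "('v \<Rightarrow> 'v \<Rightarrow> bool) \<Rightarrow> 'v \<Rightarrow> ('v \<times> 'v) set" where
  "in_arcs adj v = {(w, v) | w. adj w v}"

text \<open>(V, adj) is a tree with bipartition V = VX \<union> VY such that the colouring c is legal;
  the bijections A(v) \<rightarrow> X (v \<in> VX), A(v) \<rightarrow> Y (v \<in> VY) force valencies |X| resp. |Y|,
  so the tree is the (|X|,|Y|)-biregular tree with its natural bipartition.\<close>
definition legal_coloured_biregular_tree ::
  "'a set \<Rightarrow> 'a set \<Rightarrow> 'v set \<Rightarrow> ('v \<Rightarrow> 'v \<Rightarrow> bool) \<Rightarrow> 'v set \<Rightarrow> 'v set \<Rightarrow> ('v \<times> 'v \<Rightarrow> 'a) \<Rightarrow> bool"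
  where
  "legal_coloured_biregular_tree X Y V adj VX VY c \<longleftrightarrow>
     tree V adj \<and> V = VX \<union> VY \<and> VX \<inter> VY = {} \<and>
     (\<forall>u w. adj u w \<longrightarrow> (u \<in> VX \<and> w \<in> VY) \<or> (u \<in> VY \<and> w \<in> VX)) \<and>
     (\<forall>v\<in>VX. bij_betw c (out_arcs adj v) X) \<and>
     (\<forall>v\<in>VY. bij_betw c (out_arcs adj v) Y) \<and>
     (\<forall>v\<in>V. \<forall>a\<in>in_arcs adj v. \<forall>b\<in>in_arcs adj v. c a = c b)"

definition tree_aut :: "'v set \<Rightarrow> ('v \<Rightarrow> 'v \<Rightarrow> bool) \<Rightarrow> ('v \<Rightarrow> 'v) \<Rightarrow> bool" where
  "tree_aut V adj g \<longleftrightarrow> g permutes V \<and> (\<forall>u\<in>V. \<forall>w\<in>V. adj u w \<longleftrightarrow> adj (g u) (g w))"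

text \<open>Local action c|A(gv) \<circ> g|A(v) \<circ> (c|A(v))^{-1}, extended by the identity outside
  the colour set c(A(v)).\<close>
definition local_action ::
  "('v \<Rightarrow> 'v \<Rightarrow> bool) \<Rightarrow> ('v \<times> 'v \<Rightarrow> 'a) \<Rightarrow> ('v \<Rightarrow> 'v) \<Rightarrow> 'v \<Rightarrow> 'a \<Rightarrow> 'a" where
  "local_action adj c g v = (\<lambda>x. if x \<in> c ` out_arcs adj v
      then (let e = inv_into (out_arcs adj v) c x in c (g (fst e), g (snd e)))
      else x)"

definition U_c ::
  "'v set \<Rightarrow> ('v \<Rightarrow> 'v \<Rightarrow> bool) \<Rightarrow> 'v set \<Rightarrow> 'v set \<Rightarrow> ('v \<times> 'v \<Rightarrow> 'a)
     \<Rightarrow> ('a \<Rightarrow> 'a) set \<Rightarrow> ('a \<Rightarrow> 'a) set \<Rightarrow> ('v \<Rightarrow> 'v) set" where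
  "U_c V adj VX VY c M N = {g. tree_aut V adj g \<and> g ` VX = VX \<and>
      (\<forall>v\<in>VX. local_action adj c g v \<in> M) \<and> (\<forall>v\<in>VY. local_action adj c g v \<in> N)}"

text \<open>The box product: the group induced on VY by U_c(M,N) (elements represented as
  permutations of VY, identity outside VY).\<close>
definition box_product ::
  "'v set \<Rightarrow> ('v \<Rightarrow> 'v \<Rightarrow> bool) \<Rightarrow> 'v set \<Rightarrow> 'v set \<Rightarrow> ('v \<times> 'v \<Rightarrow> 'a)
     \<Rightarrow> ('a \<Rightarrow> 'a) set \<Rightarrow> ('a \<Rightarrow> 'a) set \<Rightarrow> ('v \<Rightarrow> 'v) set" where
  "box_product V adj VX VY c M N =
     (\<lambda>g. \<lambda>v. if v \<in> VY then g v else v) ` U_c V adj VX VY c M N"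

end

theory Submission imports Defs begin

definition pf :: "'a list \<Rightarrow> 'a list \<Rightarrow> bool" where "pf t s \<longleftrightarrow> (\<exists>u. s = t @ u)"
definition antichain :: "'a list set \<Rightarrow> bool" where
  "antichain T \<longleftrightarrow> (\<forall>t\<in>T. \<forall>t'\<in>T. pf t t' \<longrightarrow> t = t')"
definition tw :: "'a list set \<Rightarrow> ('a \<Rightarrow> 'a) \<Rightarrow> 'a list \<Rightarrow> 'a list" where
  "tw T \<sigma> s = (if \<exists>t\<in>T. pf t s then (let t = SOME t. t \<in> T \<and> pf t s in t @ map \<sigma> (drop (length t) s)) else s)"

lemma pf_cmp: "pf t s \<Longrightarrow> pf t' s \<Longrightarrow> pf t t' \<or> pf t' t"
  unfolding pf_def by (metis append_eq_append_conv2)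

lemma tw1: assumes "antichain T" "t \<in> T" "pf t s" shows "tw T \<sigma> s = t @ map \<sigma> (drop (length t) s)"
proof -
  have "(SOME t. t \<in> T \<and> pf t s) = t"
  proof (rule some_equality)
    show "t \<in> T \<and> pf t s" using assms by simp
    fix t' assume "t' \<in> T \<and> pf t' s"
    then show "t' = t" using pf_cmp[of t' s t] assms unfolding antichain_def by metis
  qed
  then show ?thesis using assms unfolding tw_def by auto
qed

lemma tw2: "\<not> (\<exists>t\<in>T. pf t s) \<Longrightarrow> tw T \<sigma> s = s" unfolding tw_def by auto

lemma pf_app: "pf t (t @ u)" by (simp add: pf_def)

lemma tw_tw: assumes "antichain T" shows "tw T \<sigma>' (tw T \<sigma> s) = tw T (\<sigma>' \<circ> \<sigma>) s"
proof (cases "\<exists>t\<in>T. pf t s")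
  case True
  then obtain t where t: "t \<in> T" "pf t s" by blast
  then obtain u where u: "s = t @ u" by (auto simp: pf_def)
  have "tw T \<sigma> s = t @ map \<sigma> u" using tw1[OF assms t] u by simp
  then show ?thesis using tw1[OF assms t(1) pf_app, of \<sigma>'] tw1[OF assms t, of "\<sigma>' \<circ> \<sigma>"] u by simp
next
  case False then show ?thesis by (simp add: tw2)
qed

lemma tw_id: "antichain T \<Longrightarrow> tw T id s = s"
  by (cases "\<exists>t\<in>T. pf t s") (auto simp: tw2 dest!: tw1[where \<sigma> = id] simp: pf_def)

lemma tw_len: "antichain T \<Longrightarrow> length (tw T \<sigma> s) = length s"
  by (cases "\<exists>t\<in>T. pf t s") (auto simp: tw2 dest!: tw1[where \<sigma> = \<sigma>] simp: pf_def)

lemma tw_snoc: assumes "antichain T"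
  shows "tw T \<sigma> (s @ [x]) = tw T \<sigma> s @ [if \<exists>t\<in>T. pf t s then \<sigma> x else x]"
proof (cases "\<exists>t\<in>T. pf t s")
  case True
  then obtain t where t: "t \<in> T" "pf t s" by blast
  then obtain u where u: "s = t @ u" by (auto simp: pf_def)
  have "pf t (s @ [x])" using u by (simp add: pf_def)
  then show ?thesis using tw1[OF assms t] tw1[OF assms t(1)] u True by simp
next
  case False
  show ?thesis
  proof (cases "\<exists>t\<in>T. pf t (s @ [x])")
    case True
    then obtain t where t: "t \<in> T" "pf t (s @ [x])" by blast
    have "t = s @ [x]"
    proof -
      obtain u where u: "s @ [x] = t @ u" using t by (auto simp: pf_def)
      show ?thesis
      proof (cases u rule: rev_cases)
        case Nil then show ?thesis using u by simp
      next
        case (snoc u' y) then have "s = t @ u'" using u by simp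
        then show ?thesis using False t by (auto simp: pf_def)
      qed
    qed
    then show ?thesis using tw1[OF assms t] False tw2[OF False] by simp
  next
    case False2: False
    then show ?thesis using False tw2[of T s] tw2[of T "s @ [x]"] by simp
  qed
qed

lemma tw_nth_hi: assumes "antichain T" "t \<in> T" "pf t s" "j \<le> length s" "length t \<le> Suc j"
  "2 \<le> length t" "\<forall>i<length t. length t \<le> i + 2 \<longrightarrow> \<sigma> (t ! i) = t ! i"
  shows "(k # tw T \<sigma> s) ! j = \<sigma> ((k # s) ! j)"
proof -
  obtain u where u: "s = t @ u" using assms(3) by (auto simp: pf_def)
  have e: "tw T \<sigma> s = t @ map \<sigma> u" using tw1[OF assms(1-3)] u by simp
  obtain j' where j': "j = Suc j'" using assms(5,6) by (cases j) auto
  show ?thesis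
  proof (cases "j' < length t")
    case True
    then show ?thesis using e u j' assms(5,7) by (simp add: nth_append)
  next
    case False
    then show ?thesis using e u j' assms(4) by (simp add: nth_append)
  qed
qed

lemma tw_nth_lo: assumes "antichain T" "t \<in> T" "pf t s" "j \<le> length t"
  shows "(k # tw T \<sigma> s) ! j = (k # s) ! j"
proof -
  obtain u where u: "s = t @ u" using assms(3) by (auto simp: pf_def)
  have e: "tw T \<sigma> s = t @ map \<sigma> u" using tw1[OF assms(1-3)] u by simp
  show ?thesis using e u assms(4) by (cases j) (auto simp: nth_append)
qed

locale ctree =
  fixes X Y :: "'a set" and V VX VY :: "'v set" and adj :: "'v \<Rightarrow> 'v \<Rightarrow> bool"
    and c :: "'v \<times> 'v \<Rightarrow> 'a"
  assumes legal: "legal_coloured_biregular_tree X Y V adj VX VY c"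
    and disj: "X \<inter> Y = {}"
    and X2: "\<exists>a\<in>X. \<exists>b\<in>X. a \<noteq> b" and Y2: "\<exists>a\<in>Y. \<exists>b\<in>Y. a \<noteq> b"
begin

lemma tree: "tree V adj" and VU: "V = VX \<union> VY" and VXY: "VX \<inter> VY = {}"
  and bip: "\<And>u w. adj u w \<Longrightarrow> (u \<in> VX \<and> w \<in> VY) \<or> (u \<in> VY \<and> w \<in> VX)"
  and bX: "\<And>v. v \<in> VX \<Longrightarrow> bij_betw c (out_arcs adj v) X"
  and bY: "\<And>v. v \<in> VY \<Longrightarrow> bij_betw c (out_arcs adj v) Y"
  and inc: "\<And>v a b. v \<in> V \<Longrightarrow> a \<in> in_arcs adj v \<Longrightarrow> b \<in> in_arcs adj v \<Longrightarrow> c a = c b"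
  using legal unfolding legal_coloured_biregular_tree_def by blast+

lemma graph: "graph V adj" using tree unfolding tree_def by blast

lemma adj_sym: "adj u w \<Longrightarrow> adj w u" using graph unfolding graph_def by blast
lemma adj_V: "adj u w \<Longrightarrow> u \<in> V \<and> w \<in> V" using graph unfolding graph_def by blast
lemma adj_neq: "adj u w \<Longrightarrow> u \<noteq> w" using graph unfolding graph_def by blast

definition col :: "'v \<Rightarrow> 'a set" where "col v = (if v \<in> VX then X else Y)"

lemma bcol: "v \<in> V \<Longrightarrow> bij_betw c (out_arcs adj v) (col v)"
  using bX bY VU by (auto simp: col_def)

lemma inc2: "adj a v \<Longrightarrow> adj b v \<Longrightarrow> c (a, v) = c (b, v)"
  using inc[of v "(a,v)" "(b,v)"] adj_V by (auto simp: in_arcs_def)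

lemma arc_col: "adj v w \<Longrightarrow> c (v, w) \<in> col v"
  using bcol[of v] adj_V[of v w] by (auto simp: bij_betw_def out_arcs_def)

lemma arc_inj: "adj v w \<Longrightarrow> adj v w' \<Longrightarrow> c (v, w) = c (v, w') \<Longrightarrow> w = w'"
  using bcol[of v] adj_V[of v w] unfolding bij_betw_def inj_on_def out_arcs_def by blast

lemma arc_ex: "v \<in> V \<Longrightarrow> x \<in> col v \<Longrightarrow> \<exists>w. adj v w \<and> c (v, w) = x"
proof -
  assume a: "v \<in> V" "x \<in> col v"
  then have "x \<in> c ` out_arcs adj v" using bcol[of v] unfolding bij_betw_def by auto
  then show ?thesis unfolding out_arcs_def by auto
qed

definition nbr :: "'v \<Rightarrow> 'a \<Rightarrow> 'v" where "nbr v x = (THE w. adj v w \<and> c (v, w) = x)"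

lemma nbr: assumes "v \<in> V" "x \<in> col v" shows "adj v (nbr v x)" "c (v, nbr v x) = x"
proof -
  obtain w where w: "adj v w" "c (v, w) = x" using arc_ex assms by blast
  have "nbr v x = w" unfolding nbr_def using w arc_inj by blast
  then show "adj v (nbr v x)" "c (v, nbr v x) = x" using w by auto
qed

lemma nbr_eq: "adj v w \<Longrightarrow> nbr v (c (v, w)) = w"
  using nbr[of v "c (v,w)"] arc_col[of v w] adj_V[of v w] arc_inj by blast

lemma VX_ne: "VX \<noteq> {}"
proof -
  obtain v where v: "v \<in> V" using tree unfolding tree_def by blast
  show ?thesis
  proof (cases "v \<in> VX")
    case False
    then have "v \<in> VY" using v VU by auto
    then have "col v = Y" using VXY by (auto simp: col_def)
    then obtain y where "y \<in> col v" using Y2 by auto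
    then have "adj v (nbr v y)" using nbr v by auto
    then show ?thesis using bip \<open>v \<in> VY\<close> VXY by blast
  qed auto
qed

definition r :: 'v where "r = (SOME r. r \<in> VX)"
lemma r: "r \<in> VX" unfolding r_def using VX_ne some_in_eq by blast
lemma rV: "r \<in> V" using r VU by auto

lemma r_has_in: "\<exists>a. adj a r"
proof -
  obtain x where "x \<in> X" using X2 by auto
  then have "adj r (nbr r x)" using nbr[of r x] r rV by (auto simp: col_def)
  then show ?thesis using adj_sym by blast
qed

definition kap :: 'a where "kap = c (SOME a. adj a r, r)"

lemma kap: "adj a r \<Longrightarrow> c (a, r) = kap"
  unfolding kap_def using inc2 r_has_in by (metis someI_ex)

lemma kapY: "kap \<in> Y"
proof -
  obtain a where a: "adj a r" using r_has_in by blast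
  then have "a \<in> VY" using bip r VXY by blast
  then have "c (a, r) \<in> Y" using arc_col[OF a] VXY by (auto simp: col_def split: if_splits)
  then show ?thesis using kap a by simp
qed


definition fol :: "'a list \<Rightarrow> 'v" where "fol s = foldl nbr r s"

lemma fol_Nil[simp]: "fol [] = r" and fol_snoc[simp]: "fol (s @ [x]) = nbr (fol s) x"
  by (auto simp: fol_def)

definition par :: "nat \<Rightarrow> 'a set" where "par i = (if even i then X else Y)"

definition valid :: "'a list \<Rightarrow> bool" where
  "valid s \<longleftrightarrow> (\<forall>i<length s. s ! i \<in> par i) \<and>
     (\<forall>i. Suc (Suc i) < Suc (length s) \<longrightarrow> (kap # s) ! Suc (Suc i) \<noteq> (kap # s) ! i)"

lemma valid_Nil[simp]: "valid []" by (simp add: valid_def)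

lemma valid_snoc: "valid (s @ [x]) \<longleftrightarrow> valid s \<and> x \<in> par (length s) \<and>
    (s \<noteq> [] \<longrightarrow> x \<noteq> last (kap # butlast s))"
proof -
  have A: "(\<forall>i<length (s@[x]). (s@[x]) ! i \<in> par i) \<longleftrightarrow>
      (\<forall>i<length s. s ! i \<in> par i) \<and> x \<in> par (length s)"
    by (auto simp: nth_append less_Suc_eq)
  have L: "s \<noteq> [] \<Longrightarrow> last (kap # butlast s) = (kap # s) ! (length s - 1)"
    by (cases s rule: rev_cases) (auto simp: nth_append last_conv_nth)
  have B: "(\<forall>i. Suc (Suc i) < Suc (length (s@[x])) \<longrightarrow> (kap # s @ [x]) ! Suc (Suc i) \<noteq> (kap # s @ [x]) ! i)
     \<longleftrightarrow> (\<forall>i. Suc (Suc i) < Suc (length s) \<longrightarrow> (kap # s) ! Suc (Suc i) \<noteq> (kap # s) ! i) \<and>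
         (s \<noteq> [] \<longrightarrow> x \<noteq> (kap # s) ! (length s - 1))"
  proof -
    have e1: "i < length s \<Longrightarrow> (kap # s @ [x]) ! Suc i = (kap # s) ! Suc i" for i
      by (simp add: nth_append)
    have e2: "i \<le> length s \<Longrightarrow> (kap # s @ [x]) ! i = (kap # s) ! i" for i
      by (cases i) (auto simp: nth_append)
    have e3: "(kap # s @ [x]) ! Suc (length s) = x" by (simp add: nth_append)
    show ?thesis
    proof (intro iffI conjI allI impI)
      fix i assume H: "\<forall>i. Suc (Suc i) < Suc (length (s@[x])) \<longrightarrow> (kap # s @ [x]) ! Suc (Suc i) \<noteq> (kap # s @ [x]) ! i"
        and i: "Suc (Suc i) < Suc (length s)"
      show "(kap # s) ! Suc (Suc i) \<noteq> (kap # s) ! i"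
        using H[rule_format, of i] i e1[of "Suc i"] e2[of i] by simp
    next
      assume H: "\<forall>i. Suc (Suc i) < Suc (length (s@[x])) \<longrightarrow> (kap # s @ [x]) ! Suc (Suc i) \<noteq> (kap # s @ [x]) ! i"
        and ne: "s \<noteq> []"
      show "x \<noteq> (kap # s) ! (length s - 1)"
        using H[rule_format, of "length s - 1"] ne e3 e2[of "length s - 1"]
        by (cases s) auto
    next
      fix i assume H: "(\<forall>i. Suc (Suc i) < Suc (length s) \<longrightarrow> (kap # s) ! Suc (Suc i) \<noteq> (kap # s) ! i) \<and>
         (s \<noteq> [] \<longrightarrow> x \<noteq> (kap # s) ! (length s - 1))"
        and i: "Suc (Suc i) < Suc (length (s @ [x]))"
      show "(kap # s @ [x]) ! Suc (Suc i) \<noteq> (kap # s @ [x]) ! i"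
      proof (cases "Suc i < length s")
        case True then show ?thesis using H e1[of "Suc i"] e2[of i] by simp
      next
        case False
        then have "Suc i = length s" using i by simp
        then have "i = length s - 1" "s \<noteq> []" by auto
        then show ?thesis using H e3 e2[of i] by (auto simp: nth_append)
      qed
    qed
  qed
  show ?thesis unfolding valid_def A B using L by auto
qed

lemma valid_take: assumes "valid s" shows "valid (take n s)"
proof -
  have e: "(kap # take n s) ! j = (kap # s) ! j" if "j < Suc (length (take n s))" for j
    using that by (cases j) auto
  show ?thesis using assms unfolding valid_def
  proof (intro conjI allI impI)
    fix i assume H: "(\<forall>i<length s. s ! i \<in> par i) \<and>
     (\<forall>i. Suc (Suc i) < Suc (length s) \<longrightarrow> (kap # s) ! Suc (Suc i) \<noteq> (kap # s) ! i)"
     and i: "Suc (Suc i) < Suc (length (take n s))"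
    have 1: "(kap # take n s) ! i = (kap # s) ! i" by (rule e) (use i in auto)
    have 2: "(kap # take n s) ! Suc (Suc i) = (kap # s) ! Suc (Suc i)" using e i by blast
    have "Suc (Suc i) < Suc (length s)" using i by simp
    then show "(kap # take n s) ! Suc (Suc i) \<noteq> (kap # take n s) ! i"
      using H 1 2 by simp
  qed auto
qed

lemma valid_prefix: "valid (s @ t) \<Longrightarrow> valid s"
  using valid_take[of "s @ t" "length s"] by simp

lemma fol_par: "valid s \<Longrightarrow> fol s \<in> (if even (length s) then VX else VY)"
proof (induction s rule: rev_induct)
  case Nil then show ?case using r by simp
next
  case (snoc x s)
  then have v: "valid s" and x: "x \<in> par (length s)" using valid_snoc by auto
  have fs: "fol s \<in> (if even (length s) then VX else VY)" using snoc v by auto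
  then have fV: "fol s \<in> V" using VU by (auto split: if_splits)
  have "col (fol s) = par (length s)" using fs VXY by (auto simp: col_def par_def split: if_splits)
  then have a: "adj (fol s) (nbr (fol s) x)" using nbr fV x by auto
  show ?case
  proof (cases "even (length s)")
    case True
    then have "fol s \<in> VX" using fs by simp
    then have "nbr (fol s) x \<in> VY" using bip[OF a] VXY by blast
    then show ?thesis using True by simp
  next
    case False
    then have "fol s \<in> VY" using fs by simp
    then have "nbr (fol s) x \<in> VX" using bip[OF a] VXY by blast
    then show ?thesis using False by simp
  qed
qed

lemma fol_V: "valid s \<Longrightarrow> fol s \<in> V"
  using fol_par[of s] VU by (auto split: if_splits)

lemma col_fol: "valid s \<Longrightarrow> col (fol s) = par (length s)"
  using fol_par[of s] VXY by (auto simp: col_def par_def split: if_splits)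

lemma fol_adj: assumes "valid (s @ [x])"
  shows "adj (fol s) (fol (s @ [x]))" "c (fol s, fol (s @ [x])) = x"
proof -
  have v: "valid s" and x: "x \<in> par (length s)" using assms valid_snoc by auto
  have "x \<in> col (fol s)" using col_fol[OF v] x by simp
  then show "adj (fol s) (fol (s @ [x]))" "c (fol s, fol (s @ [x])) = x"
    using nbr[of "fol s" x] fol_V[OF v] by auto
qed

lemma fol_in: "valid s \<Longrightarrow> adj a (fol s) \<Longrightarrow> c (a, fol s) = last (kap # s)"
proof (induction s rule: rev_induct)
  case Nil then show ?case using kap by simp
next
  case (snoc x s)
  have "adj (fol s) (fol (s @ [x]))" "c (fol s, fol (s @ [x])) = x" using fol_adj snoc by auto
  then show ?case using inc2[OF snoc(3)] by simp
qed

definition tr :: "'a list \<Rightarrow> 'v list" where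
  "tr s = map (\<lambda>i. fol (take i s)) [0..<Suc (length s)]"

lemma take_Suc_snoc: "i < length s \<Longrightarrow> take (Suc i) s = take i s @ [s ! i]"
  by (simp add: take_Suc_conv_app_nth)

lemma tr_len: "length (tr s) = Suc (length s)" by (simp add: tr_def)
lemma tr_nth: "i \<le> length s \<Longrightarrow> tr s ! i = fol (take i s)"
  unfolding tr_def by (subst nth_map) (auto simp del: upt_Suc)

lemma tr_reduced: assumes v: "valid s" shows "reduced_path adj (tr s) r (fol s)"
  unfolding reduced_path_def
proof (intro conjI allI impI)
  show "tr s \<noteq> []" by (simp add: tr_def)
  show "hd (tr s) = r" proof -
    have "tr s \<noteq> []" by (simp add: tr_def)
    then have "hd (tr s) = tr s ! 0" by (rule hd_conv_nth)
    then show ?thesis using tr_nth[of 0 s] by simp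
  qed
  show "last (tr s) = fol s"
  proof -
    have "tr s \<noteq> []" by (simp add: tr_def)
    then have "last (tr s) = tr s ! (length (tr s) - 1)" by (rule last_conv_nth)
    then show ?thesis using tr_nth[of "length s" s] tr_len[of s] by simp
  qed
next
  fix i assume i: "Suc i < length (tr s)"
  then have i': "i < length s" by (simp add: tr_len)
  have "valid (take (Suc i) s)" using valid_take v by blast
  then have "adj (fol (take i s)) (fol (take (Suc i) s))"
    using fol_adj(1)[of "take i s" "s ! i"] i' by (simp add: take_Suc_snoc)
  then show "adj (tr s ! i) (tr s ! Suc i)" using i' tr_nth[of i s] tr_nth[of "Suc i" s] by simp
next
  fix i assume i: "Suc (Suc i) < length (tr s)"
  then have i': "Suc i < length s" by (simp add: tr_len)
  let ?a = "fol (take i s)" and ?b = "fol (take (Suc i) s)" and ?d = "fol (take (Suc (Suc i)) s)"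
  have v2: "valid (take (Suc (Suc i)) s)" using valid_take v by blast
  have ts: "take (Suc (Suc i)) s = take (Suc i) s @ [s ! Suc i]" using i' take_Suc_snoc by blast
  have ts1: "take (Suc i) s = take i s @ [s ! i]" using i' take_Suc_snoc[of i s] by simp
  have bd: "adj ?b ?d" "c (?b, ?d) = s ! Suc i" using fol_adj[of "take (Suc i) s" "s ! Suc i"] v2 ts by auto
  have v1: "valid (take (Suc i) s)" using valid_take v by blast
  have "adj ?a ?b" using fol_adj(1)[of "take i s" "s ! i"] v1 ts1 by simp
  then have "c (?b, ?a) = last (kap # take i s)" using fol_in[of "take i s" ?b] adj_sym valid_take v by blast
  also have "\<dots> = (kap # s) ! i" using i' by (cases i) (auto simp: last_conv_nth)
  finally have ba: "c (?b, ?a) = (kap # s) ! i" .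
  have "(kap # s) ! Suc (Suc i) \<noteq> (kap # s) ! i" using v i' unfolding valid_def by auto
  then have "?d \<noteq> ?a" using bd ba by auto
  then show "tr s ! i \<noteq> tr s ! Suc (Suc i)" using i' tr_nth[of i s] tr_nth[of "Suc (Suc i)" s] by simp
qed

lemma fol_inj: assumes v: "valid s" "valid s'" and e: "fol s = fol s'" shows "s = s'"
proof -
  have u: "\<forall>u\<in>V. \<forall>w\<in>V. \<exists>!p. reduced_path adj p u w" using tree unfolding tree_def by blast
  have "tr s = tr s'" using u rV fol_V[OF v(1)] tr_reduced[OF v(1)] tr_reduced[OF v(2)] e by metis
  then have len: "length s = length s'" using tr_len by (metis nat.inject)
  have cs: "s ! i = c (tr s ! i, tr s ! Suc i)" if "valid s" "i < length s" for s i
  proof -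
    have "valid (take (Suc i) s)" using valid_take that by blast
    then show ?thesis using fol_adj(2)[of "take i s" "s ! i"] that tr_nth[of i s] tr_nth[of "Suc i" s]
      by (simp add: take_Suc_snoc)
  qed
  show ?thesis
  proof (rule nth_equalityI)
    show "length s = length s'" by (rule len)
    fix i assume "i < length s"
    then show "s ! i = s' ! i" using cs[OF v(1)] cs[OF v(2)] len \<open>tr s = tr s'\<close> by metis
  qed
qed

lemma fol_surj: assumes u: "u \<in> V" shows "\<exists>s. valid s \<and> fol s = u"
proof -
  obtain p where p: "reduced_path adj p r u" using tree rV u unfolding tree_def by blast
  have pne: "p \<noteq> []" and hp: "hd p = r" and lp: "last p = u"
    and pa: "\<And>i. Suc i < length p \<Longrightarrow> adj (p ! i) (p ! Suc i)"
    and pr: "\<And>i. Suc (Suc i) < length p \<Longrightarrow> p ! i \<noteq> p ! Suc (Suc i)"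
    using p unfolding reduced_path_def by auto
  define s where "s = map (\<lambda>i. c (p ! i, p ! Suc i)) [0..<length p - 1]"
  have ls: "length s = length p - 1" by (simp add: s_def)
  have si: "i < length s \<Longrightarrow> s ! i = c (p ! i, p ! Suc i)" for i by (simp add: s_def)
  have p0: "p ! 0 = r" using hp pne by (simp add: hd_conv_nth)
  have claim: "i < length p \<Longrightarrow> (\<forall>j\<le>i. valid (take j s) \<and> fol (take j s) = p ! j)" for i
  proof (induction i)
    case 0 then show ?case using p0 by simp
  next
    case (Suc i)
    then have IH: "\<forall>j\<le>i. valid (take j s) \<and> fol (take j s) = p ! j" by simp
    have i: "i < length s" using Suc.prems ls by simp
    have ts: "take (Suc i) s = take i s @ [s ! i]" using i take_Suc_snoc by blast
    have a: "adj (p ! i) (p ! Suc i)" using pa Suc.prems by blast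
    have vi: "valid (take i s)" and fi: "fol (take i s) = p ! i" using IH by auto
    have x1: "s ! i \<in> par (length (take i s))"
      using arc_col[OF a] si[OF i] col_fol[OF vi] fi by simp
    have x2: "s ! i \<noteq> last (kap # butlast (take i s))" if ne: "take i s \<noteq> []"
    proof -
      obtain k where k: "i = Suc k" using ne by (cases i) auto
      have bt: "butlast (take i s) = take k s" using k i by (simp add: butlast_take)
      have vk: "valid (take k s)" and fk: "fol (take k s) = p ! k" using IH k by auto
      have ak: "adj (p ! k) (p ! i)" using pa Suc.prems k by simp
      have "last (kap # take k s) = c (p ! i, p ! k)"
        using fol_in[OF vk, of "p ! i"] fk adj_sym[OF ak] by simp
      moreover have "p ! k \<noteq> p ! Suc i" using pr[of k] Suc.prems k by simp
      then have "c (p ! i, p ! Suc i) \<noteq> c (p ! i, p ! k)"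
        using arc_inj[OF a adj_sym[OF ak]] by metis
      ultimately show ?thesis using si[OF i] bt by simp
    qed
    have vS: "valid (take (Suc i) s)" using ts valid_snoc vi x1 x2 by auto
    have fS: "fol (take (Suc i) s) = p ! Suc i" using ts fi si[OF i] nbr_eq[OF a] by simp
    show ?case using IH vS fS le_Suc_eq by auto
  qed
  have "length p - 1 < length p" using pne by simp
  then have "valid (take (length p - 1) s) \<and> fol (take (length p - 1) s) = p ! (length p - 1)"
    using claim by blast
  moreover have "take (length p - 1) s = s" using ls by simp
  moreover have "p ! (length p - 1) = u" using lp pne by (simp add: last_conv_nth)
  ultimately show ?thesis by auto
qed

definition wd :: "'v \<Rightarrow> 'a list" where "wd u = (THE s. valid s \<and> fol s = u)"

lemma wd: assumes "u \<in> V" shows "valid (wd u) \<and> fol (wd u) = u"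
proof -
  obtain s where s: "valid s" "fol s = u" using fol_surj assms by blast
  have "\<exists>!s. valid s \<and> fol s = u" using s fol_inj by blast
  then show ?thesis unfolding wd_def by (rule theI')
qed

lemma wd_fol: "valid s \<Longrightarrow> wd (fol s) = s"
proof -
  assume v: "valid s"
  have "valid (wd (fol s)) \<and> fol (wd (fol s)) = fol s" using wd fol_V v by blast
  then show ?thesis using fol_inj v by blast
qed

lemma adj_wd: assumes u: "u \<in> V" and a: "adj u w"
  shows "(wd u \<noteq> [] \<and> wd w = butlast (wd u)) \<or> (valid (wd u @ [c (u, w)]) \<and> wd w = wd u @ [c (u, w)])"
proof -
  let ?s = "wd u"
  have vs: "valid ?s" and fs: "fol ?s = u" using wd u by auto
  show ?thesis
  proof (cases "?s \<noteq> [] \<and> w = fol (butlast ?s)")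
    case True
    then have "valid (butlast ?s)" using vs valid_take by (simp add: butlast_conv_take)
    then show ?thesis using True wd_fol by auto
  next
    case False
    have x1: "c (u, w) \<in> par (length ?s)" using arc_col[OF a] col_fol[OF vs] fs by simp
    have x2: "c (u, w) \<noteq> last (kap # butlast ?s)" if ne: "?s \<noteq> []"
    proof -
      obtain s' z where sz: "?s = s' @ [z]" using ne by (cases ?s rule: rev_cases) auto
      have v': "valid (s' @ [z])" using vs sz by simp
      have a1: "adj (fol s') u" using fol_adj(1)[OF v'] fs sz by simp
      have "last (kap # s') = c (u, fol s')" using fol_in[OF valid_prefix[OF v'] adj_sym[OF a1]] by simp
      moreover have "w \<noteq> fol s'" using False ne sz by simp
      then have "c (u, w) \<noteq> c (u, fol s')" using arc_inj[OF a adj_sym[OF a1]] by metis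
      ultimately show ?thesis using sz by simp
    qed
    have v2: "valid (?s @ [c (u, w)])" using valid_snoc vs x1 x2 by auto
    have "fol (?s @ [c (u, w)]) = w" using fs nbr_eq[OF a] by simp
    then show ?thesis using v2 wd_fol by metis
  qed
qed

definition good :: "'a list set \<Rightarrow> ('a \<Rightarrow> 'a) \<Rightarrow> bool" where
  "good T \<sigma> \<longleftrightarrow> antichain T \<and> \<sigma> permutes X \<and>
     (\<forall>t\<in>T. 2 \<le> length t \<and> (\<forall>i<length t. length t \<le> i + 2 \<longrightarrow> \<sigma> (t ! i) = t ! i))"

lemma permY: "\<sigma> permutes X \<Longrightarrow> y \<in> Y \<Longrightarrow> \<sigma> y = y"
proof -
  assume p: "\<sigma> permutes X" and y: "y \<in> Y"
  have "y \<notin> X" using y disj by blast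
  then show ?thesis using permutes_not_in[OF p] by blast
qed

lemma perm_par: "\<sigma> permutes X \<Longrightarrow> x \<in> par i \<Longrightarrow> \<sigma> x \<in> par i"
proof -
  assume p: "\<sigma> permutes X" and x: "x \<in> par i"
  show ?thesis
  proof (cases "even i")
    case True then show ?thesis using x permutes_in_image[OF p] by (simp add: par_def)
  next
    case False then show ?thesis using x permY[OF p] by (simp add: par_def)
  qed
qed

lemma good_inv: "good T \<sigma> \<Longrightarrow> good T (inv \<sigma>)"
proof -
  assume g: "good T \<sigma>"
  then have p: "\<sigma> permutes X" unfolding good_def by blast
  have "inv \<sigma> (t ! i) = t ! i" if "t \<in> T" "i < length t" "length t \<le> i + 2" for t i
    using g that permutes_inv_eq[OF p] unfolding good_def by blast
  then show ?thesis using g permutes_inv[OF p] unfolding good_def by blast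
qed

lemma valid_tw: assumes g: "good T \<sigma>" and v: "valid s" shows "valid (tw T \<sigma> s)"
proof (cases "\<exists>t\<in>T. pf t s")
  case False then show ?thesis using v tw2 by metis
next
  case True
  then obtain t where t: "t \<in> T" "pf t s" by blast
  have ac: "antichain T" and p: "\<sigma> permutes X" and t2: "2 \<le> length t"
    and tf: "\<forall>i<length t. length t \<le> i + 2 \<longrightarrow> \<sigma> (t ! i) = t ! i"
    using g t unfolding good_def by auto
  obtain u where u: "s = t @ u" using t by (auto simp: pf_def)
  have e: "tw T \<sigma> s = t @ map \<sigma> u" using tw1[OF ac t] u by simp
  have lt: "length (tw T \<sigma> s) = length s" using tw_len[OF ac] by blast
  show ?thesis unfolding valid_def
  proof (intro conjI allI impI)
    fix i assume i: "i < length (tw T \<sigma> s)"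
    have si: "s ! i \<in> par i" using v i lt unfolding valid_def by auto
    show "tw T \<sigma> s ! i \<in> par i"
    proof (cases "i < length t")
      case True then show ?thesis using e u si by (simp add: nth_append)
    next
      case False then show ?thesis using e u si i lt perm_par[OF p] by (simp add: nth_append)
    qed
  next
    fix i assume i: "Suc (Suc i) < Suc (length (tw T \<sigma> s))"
    have ne: "(kap # s) ! Suc (Suc i) \<noteq> (kap # s) ! i" using v i lt unfolding valid_def by auto
    show "(kap # tw T \<sigma> s) ! Suc (Suc i) \<noteq> (kap # tw T \<sigma> s) ! i"
    proof (cases "Suc (Suc i) \<le> length t")
      case True then show ?thesis using tw_nth_lo[OF ac t, of "Suc (Suc i)"] tw_nth_lo[OF ac t, of i] ne by simp
    next
      case False
      have "(kap # tw T \<sigma> s) ! Suc (Suc i) = \<sigma> ((kap # s) ! Suc (Suc i))"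
        by (rule tw_nth_hi[OF ac t _ _ t2 tf]) (use False i lt in auto)
      moreover have "(kap # tw T \<sigma> s) ! i = \<sigma> ((kap # s) ! i)"
        by (rule tw_nth_hi[OF ac t _ _ t2 tf]) (use False i lt in auto)
      ultimately show ?thesis using ne permutes_inj[OF p] by (auto dest: injD)
    qed
  qed
qed

definition G :: "'a list set \<Rightarrow> ('a \<Rightarrow> 'a) \<Rightarrow> 'v \<Rightarrow> 'v" where
  "G T \<sigma> v = (if v \<in> V then fol (tw T \<sigma> (wd v)) else v)"

lemma G_V: assumes "good T \<sigma>" "v \<in> V" shows "G T \<sigma> v \<in> V" "wd (G T \<sigma> v) = tw T \<sigma> (wd v)"
proof -
  have "valid (tw T \<sigma> (wd v))" using valid_tw assms wd by blast
  then show "G T \<sigma> v \<in> V" "wd (G T \<sigma> v) = tw T \<sigma> (wd v)"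
    using assms(2) fol_V wd_fol unfolding G_def by auto
qed

lemma G_inv: assumes g: "good T \<sigma>" and v: "v \<in> V"
  shows "G T (inv \<sigma>) (G T \<sigma> v) = v" "G T \<sigma> (G T (inv \<sigma>) v) = v"
proof -
  have ac: "antichain T" and p: "\<sigma> permutes X" using g unfolding good_def by auto
  have "G T (inv \<sigma>) (G T \<sigma> v) = fol (tw T (inv \<sigma>) (tw T \<sigma> (wd v)))"
    using G_V[OF g v] unfolding G_def by simp
  also have "\<dots> = v" using tw_tw[OF ac] tw_id[OF ac] permutes_inv_o[OF p] wd[OF v] by simp
  finally show "G T (inv \<sigma>) (G T \<sigma> v) = v" .
  have "G T \<sigma> (G T (inv \<sigma>) v) = fol (tw T \<sigma> (tw T (inv \<sigma>) (wd v)))"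
    using G_V[OF good_inv[OF g] v] unfolding G_def by simp
  also have "\<dots> = v" using tw_tw[OF ac] tw_id[OF ac] permutes_inv_o[OF p] wd[OF v] by simp
  finally show "G T \<sigma> (G T (inv \<sigma>) v) = v" .
qed

lemma G_adj: assumes g: "good T \<sigma>" and u: "u \<in> V" and a: "adj u w"
  shows "adj (G T \<sigma> u) (G T \<sigma> w)"
proof -
  have ac: "antichain T" using g unfolding good_def by auto
  have w: "w \<in> V" using adj_V a by blast
  have Gu: "G T \<sigma> u = fol (tw T \<sigma> (wd u))" and Gw: "G T \<sigma> w = fol (tw T \<sigma> (wd w))"
    using u w unfolding G_def by auto
  have key: "adj (fol (tw T \<sigma> s)) (fol (tw T \<sigma> (s @ [x])))" if "valid (s @ [x])" for s x
  proof -
    have "valid (tw T \<sigma> (s @ [x]))" using valid_tw g that by blast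
    then show ?thesis using fol_adj(1) tw_snoc[OF ac, of \<sigma> s x] by metis
  qed
  from adj_wd[OF u a] show ?thesis
  proof
    assume h: "wd u \<noteq> [] \<and> wd w = butlast (wd u)"
    then have "wd u = wd w @ [last (wd u)]" by simp
    then have "adj (G T \<sigma> w) (G T \<sigma> u)" using key[of "wd w" "last (wd u)"] wd[OF u] Gu Gw by metis
    then show ?thesis using adj_sym by blast
  next
    assume h: "valid (wd u @ [c (u, w)]) \<and> wd w = wd u @ [c (u, w)]"
    then show ?thesis using key Gu Gw by metis
  qed
qed

lemma G_aut: assumes g: "good T \<sigma>" shows "tree_aut V adj (G T \<sigma>)"
proof -
  have g': "good T (inv \<sigma>)" using good_inv g by blast
  have "bij_betw (G T \<sigma>) V V"
    by (rule bij_betw_byWitness[where f' = "G T (inv \<sigma>)"])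
      (use G_inv[OF g] G_V[OF g] G_V[OF g'] in auto)
  moreover have "\<forall>x. x \<notin> V \<longrightarrow> G T \<sigma> x = x" unfolding G_def by simp
  ultimately have "G T \<sigma> permutes V" using bij_imp_permutes by blast
  moreover have "adj u w \<longleftrightarrow> adj (G T \<sigma> u) (G T \<sigma> w)" if "u \<in> V" "w \<in> V" for u w
  proof
    assume "adj u w" then show "adj (G T \<sigma> u) (G T \<sigma> w)" using G_adj g that by blast
  next
    assume "adj (G T \<sigma> u) (G T \<sigma> w)"
    then have "adj (G T (inv \<sigma>) (G T \<sigma> u)) (G T (inv \<sigma>) (G T \<sigma> w))" using G_adj[OF g'] G_V[OF g] that by blast
    then show "adj u w" using G_inv[OF g] that by simp
  qed
  ultimately show ?thesis unfolding tree_aut_def by blast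
qed

lemma G_VX: assumes g: "good T \<sigma>" shows "G T \<sigma> ` VX = VX"
proof -
  have ac: "antichain T" using g unfolding good_def by auto
  have m: "G T s ` VX \<subseteq> VX" if gs: "good T s" for s
  proof
    fix y assume "y \<in> G T s ` VX"
    then obtain v where v: "v \<in> VX" "y = G T s v" by blast
    have vV: "v \<in> V" using v VU by auto
    have "fol (wd v) \<in> VX" using wd[OF vV] v by simp
    then have "even (length (wd v))" using fol_par[of "wd v"] wd[OF vV] VXY by (auto split: if_splits)
    moreover have "valid (tw T s (wd v))" using valid_tw gs wd vV by blast
    ultimately show "y \<in> VX" using fol_par[of "tw T s (wd v)"] tw_len[OF ac] v vV unfolding G_def by auto
  qed
  have "VX \<subseteq> G T \<sigma> ` VX"
  proof
    fix v assume v: "v \<in> VX"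
    then have "G T (inv \<sigma>) v \<in> VX" using m[OF good_inv[OF g]] by blast
    moreover have "G T \<sigma> (G T (inv \<sigma>) v) = v" using G_inv[OF g] v VU by blast
    ultimately show "v \<in> G T \<sigma> ` VX" by (metis imageI)
  qed
  then show ?thesis using m[OF g] by blast
qed

lemma last_cons_nth2: "last (k # l) = (k # l @ [a]) ! length l"
  by (induction l arbitrary: k) auto

lemma G_loc: assumes g: "good T \<sigma>" and v: "v \<in> V"
  shows "local_action adj c (G T \<sigma>) v = (\<lambda>x. if x \<in> col v \<and> (\<exists>t\<in>T. pf t (wd v)) then \<sigma> x else x)"
proof
  fix x
  have ac: "antichain T" and t2: "\<forall>t\<in>T. 2 \<le> length t \<and> (\<forall>i<length t. length t \<le> i + 2 \<longrightarrow> \<sigma> (t ! i) = t ! i)"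
    using g unfolding good_def by auto
  have im: "c ` out_arcs adj v = col v" using bcol[OF v] by (simp add: bij_betw_def)
  have inj: "inj_on c (out_arcs adj v)" using bcol[OF v] by (simp add: bij_betw_def)
  let ?s = "wd v"
  let ?R = "\<exists>t\<in>T. pf t ?s"
  show "local_action adj c (G T \<sigma>) v x = (if x \<in> col v \<and> ?R then \<sigma> x else x)"
  proof (cases "x \<in> col v")
    case False then show ?thesis using im unfolding local_action_def by simp
  next
    case True
    obtain w where a: "adj v w" and cx: "c (v, w) = x" using arc_ex[OF v True] by blast
    have "(v, w) \<in> out_arcs adj v" using a by (simp add: out_arcs_def)
    then have iv: "inv_into (out_arcs adj v) c x = (v, w)" using inv_into_f_f[OF inj, of "(v,w)"] cx by simp
    have w: "w \<in> V" using adj_V a by blast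
    have vs: "valid ?s" and fs: "fol ?s = v" using wd v by auto
    have Gv: "G T \<sigma> v = fol (tw T \<sigma> ?s)" using v unfolding G_def by simp
    have Gw: "G T \<sigma> w = fol (tw T \<sigma> (wd w))" using w unfolding G_def by simp
    have lhs: "local_action adj c (G T \<sigma>) v x = c (G T \<sigma> v, G T \<sigma> w)"
      using True im iv unfolding local_action_def by simp
    have "c (G T \<sigma> v, G T \<sigma> w) = (if ?R then \<sigma> x else x)"
    proof -
      from adj_wd[OF v a] show ?thesis
      proof
        assume h: "?s \<noteq> [] \<and> wd w = butlast ?s"
        let ?s' = "wd w"
        obtain z where sz: "?s = ?s' @ [z]" using h by (metis append_butlast_last_id)
        have vs': "valid ?s'" and fs': "fol ?s' = w" using wd w by auto
        have vt: "valid (tw T \<sigma> ?s)" using valid_tw g vs by blast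
        define z' where "z' = (if \<exists>t\<in>T. pf t ?s' then \<sigma> z else z)"
        have tsz: "tw T \<sigma> ?s = tw T \<sigma> ?s' @ [z']"
          unfolding z'_def using tw_snoc[OF ac, of \<sigma> ?s' z] sz by simp
        have "adj (fol (tw T \<sigma> ?s')) (fol (tw T \<sigma> ?s))" using fol_adj(1)[of "tw T \<sigma> ?s'" z'] vt tsz by simp
        then have "adj (G T \<sigma> w) (G T \<sigma> v)" using Gv Gw by simp
        then have "adj (G T \<sigma> v) (fol (tw T \<sigma> ?s'))" using adj_sym Gw by simp
        then have "c (G T \<sigma> v, G T \<sigma> w) = last (kap # tw T \<sigma> ?s')"
          using fol_in[OF valid_tw[OF g vs']] Gw by simp
        also have "\<dots> = (kap # tw T \<sigma> ?s' @ [z']) ! length ?s'"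
          using last_cons_nth2[of kap "tw T \<sigma> ?s'" z'] tw_len[OF ac, of \<sigma> ?s'] by simp
        finally have c1: "c (G T \<sigma> v, G T \<sigma> w) = (kap # tw T \<sigma> ?s) ! length ?s'" using tsz by simp
        have "x = last (kap # ?s')" using fol_in[OF vs', of v] fs' a cx by simp
        also have "\<dots> = (kap # ?s' @ [z]) ! length ?s'" by (rule last_cons_nth2)
        finally have c2: "x = (kap # ?s) ! length ?s'" using sz by simp
        show ?thesis
        proof (cases ?R)
          case True
          then obtain t where t: "t \<in> T" "pf t ?s" by blast
          have "length t \<le> length ?s" using t(2) by (auto simp: pf_def)
          then have lt: "length t \<le> Suc (length ?s')" using sz by simp
          have lj: "length ?s' \<le> length ?s" using sz by simp
          have "(kap # tw T \<sigma> ?s) ! length ?s' = \<sigma> ((kap # ?s) ! length ?s')"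
            by (rule tw_nth_hi[OF ac t lj lt]) (use t2 t in auto)
          then show ?thesis using c1 c2 True by simp
        next
          case False then show ?thesis using c1 c2 tw2[OF False] by simp
        qed
      next
        assume h: "valid (?s @ [c (v, w)]) \<and> wd w = ?s @ [c (v, w)]"
        then have "valid (tw T \<sigma> (?s @ [x]))" using valid_tw g cx by blast
        then have "valid (tw T \<sigma> ?s @ [if ?R then \<sigma> x else x])" using tw_snoc[OF ac, of \<sigma> ?s x] by simp
        then have "c (fol (tw T \<sigma> ?s), fol (tw T \<sigma> ?s @ [if ?R then \<sigma> x else x])) = (if ?R then \<sigma> x else x)"
          by (rule fol_adj(2))
        then have "c (fol (tw T \<sigma> ?s), fol (tw T \<sigma> (?s @ [x]))) = (if ?R then \<sigma> x else x)"
          using tw_snoc[OF ac, of \<sigma> ?s x] by simp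
        then show ?thesis using Gv Gw h cx by simp
      qed
    qed
    then show ?thesis using lhs True by simp
  qed
qed

lemma G_Uc: assumes g: "good T \<sigma>" and sM: "\<sigma> \<in> M" and iM: "id \<in> M" and iN: "id \<in> N"
  shows "G T \<sigma> \<in> U_c V adj VX VY c M N"
proof -
  have p: "\<sigma> permutes X" using g unfolding good_def by blast
  have lX: "local_action adj c (G T \<sigma>) v \<in> M" if v: "v \<in> VX" for v
  proof -
    have vV: "v \<in> V" using v VU by auto
    have cv: "col v = X" using v by (simp add: col_def)
    show ?thesis
    proof (cases "\<exists>t\<in>T. pf t (wd v)")
      case True
      have "local_action adj c (G T \<sigma>) v = \<sigma>"
        using G_loc[OF g vV] True cv permutes_not_in[OF p] by fastforce
      then show ?thesis using sM by simp
    next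
      case False
      have "local_action adj c (G T \<sigma>) v = id" using G_loc[OF g vV] False by (simp add: id_def)
      then show ?thesis using iM by simp
    qed
  qed
  have lY: "local_action adj c (G T \<sigma>) v \<in> N" if v: "v \<in> VY" for v
  proof -
    have vV: "v \<in> V" using v VU by auto
    have cv: "col v = Y" using v VXY by (auto simp: col_def)
    have "local_action adj c (G T \<sigma>) v = id" using G_loc[OF g vV] cv permY[OF p] by (auto simp: id_def)
    then show ?thesis using iN by simp
  qed
  show ?thesis unfolding U_c_def using G_aut[OF g] G_VX[OF g] lX lY by blast
qed

context
  fixes \<sigma> :: "'a \<Rightarrow> 'a" and x0 x1 y0 :: 'a
  assumes p: "\<sigma> permutes X" and x0: "x0 \<in> X" "\<sigma> x0 = x0" and x1: "x1 \<in> X" "\<sigma> x1 \<noteq> x1"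
    and y0: "y0 \<in> Y" "y0 \<noteq> kap"
begin

definition ff :: "nat \<Rightarrow> nat \<Rightarrow> 'a" where
  "ff n i = (if i < 4 * n then [x1, y0, \<sigma> x1, kap] ! (i mod 4) else [x0, y0, x1, kap] ! (i - 4 * n))"

definition tt :: "nat \<Rightarrow> 'a list" where "tt n = map (ff n) [0..<4 * n + 4]"
definition tn :: "nat \<Rightarrow> 'a list" where "tn n = take (4 * n + 2) (tt n)"

lemma x2: "\<sigma> x1 \<in> X" "\<sigma> x1 \<noteq> x0" "x0 \<noteq> x1"
  using x0 x1 permutes_in_image[OF p] permutes_inj[OF p] by (auto dest: injD)

lemma len_tt: "length (tt n) = 4 * n + 4" by (simp add: tt_def)
lemma len_tn: "length (tn n) = 4 * n + 2" by (simp add: tn_def len_tt)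
lemma tt_nth: "i < 4 * n + 4 \<Longrightarrow> tt n ! i = ff n i" by (simp add: tt_def)
lemma tn_nth: "i < 4 * n + 2 \<Longrightarrow> tn n ! i = ff n i" by (simp add: tn_def tt_nth)

lemma ff_par: "i < 4 * n + 4 \<Longrightarrow> ff n i \<in> par i"
proof -
  assume i: "i < 4 * n + 4"
  have kY: "kap \<in> Y" by (rule kapY)
  show ?thesis
  proof (cases "i < 4 * n")
    case True
    have "i mod 4 = 0 \<or> i mod 4 = 1 \<or> i mod 4 = 2 \<or> i mod 4 = 3" by arith
    moreover have "even i \<longleftrightarrow> (i mod 4 = 0 \<or> i mod 4 = 2)" by presburger
    ultimately show ?thesis using True x1 x2 y0 kY by (auto simp: ff_def par_def)
  next
    case False
    then obtain k where k: "k < 4" "i = 4 * n + k" using i by (metis add_less_cancel_left le_add_diff_inverse not_less)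
    have pk: "par i = par k" using k by (simp add: par_def)
    have fk: "ff n i = [x0, y0, x1, kap] ! k" using k by (simp add: ff_def)
    have "k = 0 \<or> k = 1 \<or> k = 2 \<or> k = 3" using k by arith
    then show ?thesis using pk fk x0 x1 y0 kY by (auto simp: par_def)
  qed
qed

lemma ff_nb: assumes j: "j + 2 < 4 * n + 4" shows "ff n (j + 2) \<noteq> ff n j"
proof -
  have d: "x1 \<noteq> \<sigma> x1" "y0 \<noteq> kap" "x0 \<noteq> x1" "\<sigma> x1 \<noteq> x0" using x1 y0 x2 by auto
  consider "j + 2 < 4 * n" | "4 * n \<le> j" | "j < 4 * n" "4 * n \<le> j + 2" by linarith
  then show ?thesis
  proof cases
    case 1
    have "j mod 4 = 0 \<and> (j + 2) mod 4 = 2 \<or> j mod 4 = 1 \<and> (j + 2) mod 4 = 3 \<or>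
          j mod 4 = 2 \<and> (j + 2) mod 4 = 0 \<or> j mod 4 = 3 \<and> (j + 2) mod 4 = 1" by presburger
    then show ?thesis using 1 d by (auto simp: ff_def)
  next
    case 2
    then have "j - 4 * n = 0 \<or> j - 4 * n = 1" using j by linarith
    moreover have "j + 2 - 4 * n = j - 4 * n + 2" using 2 by simp
    ultimately show ?thesis using 2 d by (auto simp: ff_def)
  next
    case 3
    then have "(j mod 4 = 2 \<and> j + 2 - 4 * n = 0) \<or> (j mod 4 = 3 \<and> j + 2 - 4 * n = 1)" by presburger
    then show ?thesis using 3 d by (auto simp: ff_def)
  qed
qed

lemma valid_tt: "valid (tt n)"
  unfolding valid_def
proof (intro conjI allI impI)
  fix i assume "i < length (tt n)" then show "tt n ! i \<in> par i" using ff_par tt_nth len_tt by simp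
next
  fix i assume i: "Suc (Suc i) < Suc (length (tt n))"
  show "(kap # tt n) ! Suc (Suc i) \<noteq> (kap # tt n) ! i"
  proof (cases i)
    case 0
    have "tt n ! 1 = y0" using tt_nth[of 1 n] by (cases "n = 0") (auto simp: ff_def)
    then show ?thesis using 0 y0 by simp
  next
    case (Suc j)
    then show ?thesis using ff_nb[of j n] i len_tt tt_nth[of j n] tt_nth[of "Suc (Suc j)" n] by simp
  qed
qed

lemma valid_tn: "valid (tn n)" unfolding tn_def by (rule valid_take[OF valid_tt])

lemma tt_split: "tt n = tn n @ [x1, kap]"
proof (rule nth_equalityI)
  show "length (tt n) = length (tn n @ [x1, kap])" by (simp add: len_tt len_tn)
  fix i assume "i < length (tt n)"
  then have i: "i < 4 * n + 4" using len_tt by simp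
  consider "i < 4 * n + 2" | "i = 4 * n + 2" | "i = 4 * n + 3" using i by linarith
  then show "tt n ! i = (tn n @ [x1, kap]) ! i"
    by cases (auto simp: nth_append len_tn tn_nth tt_nth ff_def)
qed

lemma tn_pf: "pf (tn n) (tn m) \<Longrightarrow> n = m"
proof (rule ccontr)
  assume pf: "pf (tn n) (tn m)" and ne: "n \<noteq> m"
  then obtain u where u: "tn m = tn n @ u" by (auto simp: pf_def)
  then have "length (tn m) = length (tn n) + length u" by simp
  then have "4 * n + 2 \<le> 4 * m + 2" using len_tn[of n] len_tn[of m] by linarith
  then have nm: "n < m" using ne by simp
  have "tn m ! (4 * n) = tn n ! (4 * n)" using u len_tn[of n] by (simp add: nth_append)
  moreover have "tn m ! (4 * n) = x1" using nm tn_nth[of "4 * n" m] by (simp add: ff_def)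
  moreover have "tn n ! (4 * n) = x0" using tn_nth[of "4 * n" n] by (simp add: ff_def)
  ultimately show False using x2 by simp
qed

lemma good_tn: "good (tn ` S) \<sigma>"
  unfolding good_def
proof (intro conjI ballI)
  show "antichain (tn ` S)" unfolding antichain_def using tn_pf by blast
  show "\<sigma> permutes X" by (rule p)
  fix t assume "t \<in> tn ` S"
  then obtain n where t: "t = tn n" by blast
  show "2 \<le> length t" using t len_tn by simp
  show "\<forall>i<length t. length t \<le> i + 2 \<longrightarrow> \<sigma> (t ! i) = t ! i"
  proof (intro allI impI)
    fix i assume i: "i < length t" "length t \<le> i + 2"
    then have "i = 4 * n \<or> i = 4 * n + 1" using t len_tn by auto
    then show "\<sigma> (t ! i) = t ! i" using t tn_nth[of i n] x0 permY[OF p y0(1)] by (auto simp: ff_def)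
  qed
qed

lemma notR: assumes "n \<notin> S" and "l \<noteq> []" "length l \<le> 2"
  shows "\<not> (\<exists>t\<in>tn ` S. pf t (tn n @ l))"
proof
  assume "\<exists>t\<in>tn ` S. pf t (tn n @ l)"
  then obtain m where m: "m \<in> S" and pf: "pf (tn m) (tn n @ l)" by blast
  then obtain u where u: "tn n @ l = tn m @ u" by (auto simp: pf_def)
  have "pf (tn m) (tn n) \<or> pf (tn n) (tn m)" using pf_cmp[of "tn m" "tn n @ l" "tn n"] pf
    by (simp add: pf_def)
  then have "m = n"
  proof
    assume "pf (tn m) (tn n)" then show ?thesis using tn_pf by blast
  next
    assume "pf (tn n) (tn m)" then show ?thesis using tn_pf[of n m] by simp
  qed
  then show False using m assms by simp
qed

lemma isR: "n \<in> S \<Longrightarrow> pf (tn n) (tn n @ l)" by (simp add: pf_def)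

lemma distinct_G: assumes "n \<in> S" "n \<notin> S'"
  shows "\<exists>v\<in>VX. G (tn ` S) \<sigma> v \<noteq> G (tn ` S') \<sigma> v" "\<exists>v\<in>VY. G (tn ` S) \<sigma> v \<noteq> G (tn ` S') \<sigma> v"
proof -
  have ac: "antichain (tn ` S)" using good_tn unfolding good_def by blast
  have t: "tn n \<in> tn ` S" using assms by blast
  have gen: "G (tn ` S) \<sigma> (fol (tn n @ l)) \<noteq> G (tn ` S') \<sigma> (fol (tn n @ l))"
    if v: "valid (tn n @ l)" and l: "l = x1 # l'" "length l \<le> 2" for l l'
  proof -
    have fV: "fol (tn n @ l) \<in> V" using fol_V v by blast
    have w: "wd (fol (tn n @ l)) = tn n @ l" using wd_fol v by blast
    have e1: "G (tn ` S) \<sigma> (fol (tn n @ l)) = fol (tn n @ map \<sigma> l)"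
      using tw1[OF ac t isR[OF assms(1)]] fV w len_tn unfolding G_def by simp
    have e2: "G (tn ` S') \<sigma> (fol (tn n @ l)) = fol (tn n @ l)"
      using tw2[OF notR[OF assms(2)]] fV w l unfolding G_def by simp
    have v1: "valid (tn n @ map \<sigma> l)"
      using valid_tw[OF good_tn[of S] v] tw1[OF ac t isR[OF assms(1)], of \<sigma> l] len_tn by simp
    have "tn n @ map \<sigma> l \<noteq> tn n @ l" using l x1 by simp
    then have "fol (tn n @ map \<sigma> l) \<noteq> fol (tn n @ l)" using fol_inj[OF v1 v] by blast
    then show ?thesis unfolding e1 e2 .
  qed
  have v2: "valid (tn n @ [x1, kap])" using valid_tt[of n] by (simp add: tt_split)
  have v1: "valid (tn n @ [x1])" using valid_prefix[of "tn n @ [x1]" "[kap]"] v2 by simp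
  have "fol (tn n @ [x1, kap]) \<in> VX" using fol_par[OF v2] len_tn by simp
  moreover have "G (tn ` S) \<sigma> (fol (tn n @ [x1, kap])) \<noteq> G (tn ` S') \<sigma> (fol (tn n @ [x1, kap]))"
    by (rule gen[OF v2, of "[kap]"]) simp_all
  ultimately show "\<exists>v\<in>VX. G (tn ` S) \<sigma> v \<noteq> G (tn ` S') \<sigma> v" by blast
  have "fol (tn n @ [x1]) \<in> VY" using fol_par[OF v1] len_tn by simp
  moreover have "G (tn ` S) \<sigma> (fol (tn n @ [x1])) \<noteq> G (tn ` S') \<sigma> (fol (tn n @ [x1]))"
    by (rule gen[OF v1, of "[]"]) simp_all
  ultimately show "\<exists>v\<in>VY. G (tn ` S) \<sigma> v \<noteq> G (tn ` S') \<sigma> v" by blast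
qed

end

lemma pg_perm: "perm_group K Z \<Longrightarrow> f \<in> K \<Longrightarrow> f permutes Z"
  unfolding perm_group_def by (elim conjE) (drule (1) subsetD, simp)
lemma pg_id: "perm_group K Z \<Longrightarrow> id \<in> K"
  unfolding perm_group_def by (elim conjE)
lemma pg_comp: "perm_group K Z \<Longrightarrow> f \<in> K \<Longrightarrow> g \<in> K \<Longrightarrow> f \<circ> g \<in> K"
  unfolding perm_group_def by (elim conjE) simp
lemma pg_inv: "perm_group K Z \<Longrightarrow> f \<in> K \<Longrightarrow> inv f \<in> K"
  unfolding perm_group_def by (elim conjE) simp

lemma uncountable_part:
  assumes pM: "perm_group M X" and iN: "id \<in> N" and ns: "\<not> semi_regular M X"
  shows "\<exists>F. (\<forall>S::nat set. F S \<in> U_c V adj VX VY c M N) \<and>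
     (\<forall>S S'::nat set. S \<noteq> S' \<longrightarrow> (\<exists>v\<in>VX. F S v \<noteq> F S' v) \<and> (\<exists>v\<in>VY. F S v \<noteq> F S' v))"
proof -
  have "\<exists>m\<in>M. \<exists>x\<in>X. m x = x \<and> m \<noteq> id" using ns unfolding semi_regular_def by simp
  then obtain \<sigma> x0 where s: "\<sigma> \<in> M" and x0: "x0 \<in> X" "\<sigma> x0 = x0" and ni: "\<sigma> \<noteq> id"
    by (elim bexE conjE)
  have p: "\<sigma> permutes X" using pg_perm[OF pM s] .
  have iM: "id \<in> M" using pg_id[OF pM] .
  have "\<exists>x1. \<sigma> x1 \<noteq> x1"
  proof (rule ccontr)
    assume "\<not> (\<exists>x1. \<sigma> x1 \<noteq> x1)"
    then have "\<sigma> = id" by (simp add: fun_eq_iff)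
    then show False using ni by simp
  qed
  then obtain x1 where x1': "\<sigma> x1 \<noteq> x1" by (elim exE)
  have x1: "x1 \<in> X" "\<sigma> x1 \<noteq> x1"
  proof -
    show "\<sigma> x1 \<noteq> x1" by (rule x1')
    show "x1 \<in> X" proof (rule ccontr) assume "x1 \<notin> X" then show False using permutes_not_in[OF p] x1' by simp qed
  qed
  obtain ya yb where yab: "ya \<in> Y" "yb \<in> Y" "ya \<noteq> yb" using Y2 by blast
  obtain y0 where y0: "y0 \<in> Y" "y0 \<noteq> kap"
  proof (cases "ya = kap")
    case True then show ?thesis using that[of yb] yab kapY by simp
  next
    case False then show ?thesis using that[of ya] yab by simp
  qed
  define F where "F S = G (tn \<sigma> x0 x1 y0 ` S) \<sigma>" for S
  have U: "F S \<in> U_c V adj VX VY c M N" for S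
    unfolding F_def by (rule G_Uc[OF good_tn[OF p x0 x1 y0] s iM iN])
  have D: "(\<exists>v\<in>VX. F S v \<noteq> F S' v) \<and> (\<exists>v\<in>VY. F S v \<noteq> F S' v)" if "S \<noteq> S'" for S S'
  proof -
    have "\<exists>n. \<not> (n \<in> S \<longleftrightarrow> n \<in> S')" using \<open>S \<noteq> S'\<close> by (simp add: set_eq_iff)
    then obtain n where "n \<in> S \<and> n \<notin> S' \<or> n \<in> S' \<and> n \<notin> S" by blast
    then show ?thesis
    proof
      assume "n \<in> S \<and> n \<notin> S'"
      then show ?thesis using distinct_G[OF p x0 x1 y0, of n S S'] unfolding F_def by blast
    next
      assume "n \<in> S' \<and> n \<notin> S"
      then have "(\<exists>v\<in>VX. F S' v \<noteq> F S v) \<and> (\<exists>v\<in>VY. F S' v \<noteq> F S v)"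
        using distinct_G[OF p x0 x1 y0, of n S' S] unfolding F_def by blast
      then obtain v w where v: "v \<in> VX" "F S' v \<noteq> F S v" and w: "w \<in> VY" "F S' w \<noteq> F S w" by blast
      have "F S v \<noteq> F S' v" using v(2) by (rule not_sym)
      moreover have "F S w \<noteq> F S' w" using w(2) by (rule not_sym)
      ultimately show ?thesis using v(1) w(1) by blast
    qed
  qed
  show ?thesis
  proof (rule exI[of _ F], rule conjI)
    show "\<forall>S. F S \<in> U_c V adj VX VY c M N" by (intro allI) (rule U)
    show "\<forall>S S'. S \<noteq> S' \<longrightarrow> (\<exists>v\<in>VX. F S v \<noteq> F S' v) \<and> (\<exists>v\<in>VY. F S v \<noteq> F S' v)"
      by (intro allI impI) (erule D)
  qed
qed

lemma sr_eq: assumes pg: "perm_group K Z" and sr: "semi_regular K Z" and a: "a \<in> K" and b: "b \<in> K"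
  and z: "z \<in> Z" and e: "a z = b z" shows "a = b"
proof -
  have pb: "b permutes Z" using pg_perm[OF pg b] .
  have "inv b \<in> K" using pg_inv[OF pg b] .
  then have h: "inv b \<circ> a \<in> K" using pg_comp[OF pg _ a] by blast
  have "(inv b \<circ> a) z = z" using e permutes_inverses(2)[OF pb] by simp
  then have "inv b \<circ> a = id" using sr h z unfolding semi_regular_def by blast
  have "a = (b \<circ> inv b) \<circ> a" using permutes_inv_o(1)[OF pb] by simp
  also have "\<dots> = b \<circ> (inv b \<circ> a)" by (simp add: comp_assoc)
  also have "\<dots> = b" using \<open>inv b \<circ> a = id\<close> by simp
  finally show ?thesis .
qed

lemma sr_countable: assumes pg: "perm_group K Z" and sr: "semi_regular K Z" and cZ: "countable Z"
  and ne: "z \<in> Z" shows "countable K"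
proof (rule countable_image_inj_on)
  have "(\<lambda>a. a z) ` K \<subseteq> Z"
  proof
    fix y assume "y \<in> (\<lambda>a. a z) ` K"
    then obtain a where a: "a \<in> K" "y = a z" by blast
    then show "y \<in> Z" using permutes_in_image[OF pg_perm[OF pg a(1)]] ne by simp
  qed
  then show "countable ((\<lambda>a. a z) ` K)" using countable_subset cZ by blast
  show "inj_on (\<lambda>a. a z) K"
  proof (rule inj_onI)
    fix a b assume "a \<in> K" "b \<in> K" "a z = b z"
    then show "a = b" using sr_eq[OF pg sr _ _ ne] by blast
  qed
qed

lemma Uc_D: assumes "g \<in> U_c V adj VX VY c M N"
  shows "tree_aut V adj g" "g permutes V" "v \<in> VX \<Longrightarrow> local_action adj c g v \<in> M"
    "v \<in> VY \<Longrightarrow> local_action adj c g v \<in> N"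
  using assms unfolding U_c_def tree_aut_def by simp_all

lemma Uc_la: assumes g: "g \<in> U_c V adj VX VY c M N" and v: "v \<in> V" and a: "adj v w"
  shows "local_action adj c g v (c (v, w)) = c (g v, g w)"
proof -
  have inj: "inj_on c (out_arcs adj v)" using bcol[OF v] by (simp add: bij_betw_def)
  have "(v, w) \<in> out_arcs adj v" using a by (simp add: out_arcs_def)
  then have "inv_into (out_arcs adj v) c (c (v, w)) = (v, w)" using inv_into_f_f[OF inj] by blast
  moreover have "c (v, w) \<in> c ` out_arcs adj v" using \<open>(v, w) \<in> out_arcs adj v\<close> by blast
  ultimately show ?thesis unfolding local_action_def by simp
qed

lemma countable_V: assumes "countable X" "countable Y" shows "countable V"
proof -
  have "V \<subseteq> fol ` lists (X \<union> Y)"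
  proof
    fix u assume u: "u \<in> V"
    have v: "valid (wd u)" and f: "fol (wd u) = u" using wd u by auto
    have "set (wd u) \<subseteq> X \<union> Y"
    proof
      fix x assume "x \<in> set (wd u)"
      then obtain i where "i < length (wd u)" "wd u ! i = x" by (metis in_set_conv_nth)
      then have "x \<in> par i" using v unfolding valid_def by blast
      then show "x \<in> X \<union> Y" by (auto simp: par_def split: if_splits)
    qed
    then have "wd u \<in> lists (X \<union> Y)" by blast
    then show "u \<in> fol ` lists (X \<union> Y)" using f[symmetric] by (rule rev_image_eqI)
  qed
  moreover have "countable (fol ` lists (X \<union> Y))" using assms by simp
  ultimately show ?thesis by (rule countable_subset)
qed

lemma countable_part:
  assumes pM: "perm_group M X" and pN: "perm_group N Y" and sM: "semi_regular M X"
    and sN: "semi_regular N Y" and cX: "countable X" and cY: "countable Y"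
  shows "countable (U_c V adj VX VY c M N)"
proof (rule countable_image_inj_on)
  let ?U = "U_c V adj VX VY c M N"
  let ?f = "\<lambda>g. (g r, local_action adj c g r)"
  obtain x where x: "x \<in> X" using X2 by auto
  have cM: "countable M" by (rule sr_countable[OF pM sM cX x])
  have "?f ` ?U \<subseteq> V \<times> M"
  proof
    fix y assume "y \<in> ?f ` ?U"
    then obtain g where g: "g \<in> ?U" "y = ?f g" by blast
    have "g permutes V" using Uc_D(2)[OF g(1)] .
    then have "g r \<in> V" using rV permutes_in_image[OF \<open>g permutes V\<close>] by simp
    moreover have "local_action adj c g r \<in> M" using Uc_D(3)[OF g(1) r] .
    ultimately show "y \<in> V \<times> M" using g by simp
  qed
  moreover have "countable (V \<times> M)" using countable_V[OF cX cY] cM by simp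
  ultimately show "countable (?f ` ?U)" using countable_subset by blast
  show "inj_on ?f ?U"
  proof (rule inj_onI)
    fix g h assume g: "g \<in> ?U" and h: "h \<in> ?U" and e: "?f g = ?f h"
    have ag: "tree_aut V adj g" and ah: "tree_aut V adj h" using Uc_D(1) g h by auto
    have pg: "g permutes V" and ph: "h permutes V" using Uc_D(2) g h by auto
    have loc: "local_action adj c k v \<in> (if v \<in> VX then M else N)" if "k \<in> ?U" "v \<in> V" for k v
    proof (cases "v \<in> VX")
      case True then show ?thesis using Uc_D(3)[OF that(1)] by simp
    next
      case False then have "v \<in> VY" using that(2) VU by blast
      then show ?thesis using Uc_D(4)[OF that(1)] False by simp
    qed
    have claim: "valid s \<Longrightarrow> g (fol s) = h (fol s) \<and> local_action adj c g (fol s) = local_action adj c h (fol s)" for s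
    proof (induction s rule: rev_induct)
      case Nil then show ?case using e by simp
    next
      case (snoc x s)
      have vs: "valid s" using snoc.prems valid_prefix by blast
      let ?v = "fol s" and ?w = "fol (s @ [x])"
      have a: "adj ?v ?w" and cx: "c (?v, ?w) = x" using fol_adj snoc.prems by auto
      have vV: "?v \<in> V" and wV: "?w \<in> V" using adj_V a by auto
      have IH: "g ?v = h ?v" "local_action adj c g ?v = local_action adj c h ?v" using snoc.IH vs by auto
      have ga: "adj (g ?v) (g ?w)" using ag a vV wV unfolding tree_aut_def by blast
      have ha: "adj (h ?v) (h ?w)" using ah a vV wV unfolding tree_aut_def by blast
      have "c (g ?v, g ?w) = c (h ?v, h ?w)" using Uc_la[OF g vV a] Uc_la[OF h vV a] IH by simp
      then have gw: "g ?w = h ?w" using arc_inj[OF ga] ha IH(1) by simp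
      have "local_action adj c g ?w (c (?w, ?v)) = local_action adj c h ?w (c (?w, ?v))"
        using Uc_la[OF g wV adj_sym[OF a]] Uc_la[OF h wV adj_sym[OF a]] gw IH(1) by simp
      moreover have pc: "c (?w, ?v) \<in> col ?w" using arc_col adj_sym[OF a] by blast
      ultimately have eq: "local_action adj c g ?w (c (?w, ?v)) = local_action adj c h ?w (c (?w, ?v))"
        and pc: "c (?w, ?v) \<in> col ?w" by blast+
      have "local_action adj c g ?w = local_action adj c h ?w"
      proof (cases "?w \<in> VX")
        case True
        then have zz: "c (?w, ?v) \<in> X" using pc by (simp add: col_def)
        have l1: "local_action adj c g ?w \<in> M" and l2: "local_action adj c h ?w \<in> M"
          using loc[OF g wV] loc[OF h wV] True by auto
        show ?thesis by (rule sr_eq[OF pM sM l1 l2 zz eq])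
      next
        case False
        then have zz: "c (?w, ?v) \<in> Y" using pc by (simp add: col_def)
        have l1: "local_action adj c g ?w \<in> N" and l2: "local_action adj c h ?w \<in> N"
          using loc[OF g wV] loc[OF h wV] False by auto
        show ?thesis by (rule sr_eq[OF pN sN l1 l2 zz eq])
      qed
      then show ?case using gw by simp
    qed
    show "g = h"
    proof
      fix u show "g u = h u"
      proof (cases "u \<in> V")
        case True then show ?thesis using claim[of "wd u"] wd[OF True] by simp
      next
        case False then show ?thesis using permutes_not_in[OF pg False] permutes_not_in[OF ph False] by simp
      qed
    qed
  qed
qed

end

lemma uncountable_nat_set_set: "\<not> countable (UNIV :: nat set set)"
proof
  assume "countable (UNIV :: nat set set)"
  then obtain f :: "nat set \<Rightarrow> nat" where "inj_on f UNIV" unfolding countable_def by blast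
  then have "Pow (UNIV :: nat set) \<lesssim> (UNIV :: nat set)" unfolding lepoll_def
    by (intro exI[of _ f]) simp
  moreover have "(UNIV :: nat set) \<lesssim> Pow (UNIV :: nat set)" by (rule lepoll_Pow_self)
  ultimately have "(UNIV :: nat set) \<approx> Pow (UNIV :: nat set)" by (rule lepoll_antisym[rotated])
  then show False using lesspoll_Pow_self[of "UNIV :: nat set"] unfolding lesspoll_def by blast
qed

lemma legal_swap: "legal_coloured_biregular_tree X Y V adj VX VY c \<Longrightarrow>
    legal_coloured_biregular_tree Y X V adj VY VX c"
  unfolding legal_coloured_biregular_tree_def
proof (elim conjE, intro conjI)
  assume h: "\<forall>u w. adj u w \<longrightarrow> u \<in> VX \<and> w \<in> VY \<or> u \<in> VY \<and> w \<in> VX"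
  show "\<forall>u w. adj u w \<longrightarrow> u \<in> VY \<and> w \<in> VX \<or> u \<in> VX \<and> w \<in> VY"
  proof (intro allI impI)
    fix u w assume "adj u w" then show "u \<in> VY \<and> w \<in> VX \<or> u \<in> VX \<and> w \<in> VY" using h by blast
  qed
qed (assumption | blast)+

lemma Uc_swap: assumes "legal_coloured_biregular_tree X Y V adj VX VY c"
  shows "U_c V adj VX VY c M N = U_c V adj VY VX c N M"
proof -
  have VU: "V = VX \<union> VY" and VXY: "VX \<inter> VY = {}" using assms unfolding legal_coloured_biregular_tree_def by auto
  have key: "g ` VX = VX \<longleftrightarrow> g ` VY = VY" if t: "tree_aut V adj g" for g
  proof -
    have p: "g permutes V" using t unfolding tree_aut_def by blast
    have im: "g ` V = V" using permutes_image[OF p] .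
    have inj: "inj g" using permutes_inj[OF p] .
    have d1: "VY = V - VX" and d2: "VX = V - VY" using VU VXY by auto
    show ?thesis
    proof
      assume "g ` VX = VX"
      then have "g ` (V - VX) = V - VX" using image_set_diff[OF inj] im by simp
      then show "g ` VY = VY" using d1 by simp
    next
      assume "g ` VY = VY"
      then have "g ` (V - VY) = V - VY" using image_set_diff[OF inj] im by simp
      then show "g ` VX = VX" using d2 by simp
    qed
  qed
  show ?thesis
  proof (rule set_eqI)
    fix g show "g \<in> U_c V adj VX VY c M N \<longleftrightarrow> g \<in> U_c V adj VY VX c N M"
      unfolding U_c_def mem_Collect_eq
    proof
      assume h: "tree_aut V adj g \<and> g ` VX = VX \<and> (\<forall>v\<in>VX. local_action adj c g v \<in> M) \<and> (\<forall>v\<in>VY. local_action adj c g v \<in> N)"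
      then show "tree_aut V adj g \<and> g ` VY = VY \<and> (\<forall>v\<in>VY. local_action adj c g v \<in> N) \<and> (\<forall>v\<in>VX. local_action adj c g v \<in> M)"
        using key[of g] by simp
    next
      assume h: "tree_aut V adj g \<and> g ` VY = VY \<and> (\<forall>v\<in>VY. local_action adj c g v \<in> N) \<and> (\<forall>v\<in>VX. local_action adj c g v \<in> M)"
      then show "tree_aut V adj g \<and> g ` VX = VX \<and> (\<forall>v\<in>VX. local_action adj c g v \<in> M) \<and> (\<forall>v\<in>VY. local_action adj c g v \<in> N)"
        using key[of g] by simp
    qed
  qed
qed

theorem corollary6p5:
  fixes X Y :: "'a set" and M N :: "('a \<Rightarrow> 'a) set"
    and V VX VY :: "'v set" and adj :: "'v \<Rightarrow> 'v \<Rightarrow> bool" and c :: "'v \<times> 'v \<Rightarrow> 'a"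
  assumes "X \<inter> Y = {}" and "countable X" and "countable Y"
    and "\<exists>a\<in>X. \<exists>b\<in>X. a \<noteq> b" and "\<exists>a\<in>Y. \<exists>b\<in>Y. a \<noteq> b"
    and "closed_perm_group M X" and "closed_perm_group N Y"
    and "nontrivial_group M" and "nontrivial_group N"
    and "legal_coloured_biregular_tree X Y V adj VX VY c"
  shows "(countable (box_product V adj VX VY c M N)
            \<or> box_product V adj VX VY c M N \<approx> (UNIV :: nat set set))
         \<and> (countable (box_product V adj VX VY c M N)
              \<longleftrightarrow> semi_regular M X \<and> semi_regular N Y)"
proof -
  note A = assms
  interpret ct: ctree X Y V VX VY adj c
    by (unfold_locales) (use A in auto)
  have pM: "perm_group M X" using A(6) unfolding closed_perm_group_def by blast
  have pN: "perm_group N Y" using A(7) unfolding closed_perm_group_def by blast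
  let ?U = "U_c V adj VX VY c M N"
  let ?B = "box_product V adj VX VY c M N"
  define rs where "rs g = (\<lambda>v. if v \<in> VY then g v else v)" for g :: "'v \<Rightarrow> 'v"
  have B: "?B = rs ` ?U" unfolding box_product_def rs_def by simp
  show ?thesis
  proof (cases "semi_regular M X \<and> semi_regular N Y")
    case True
    have "countable ?U" using ct.countable_part[OF pM pN] True A(2,3) by blast
    then have "countable ?B" using B by simp
    then show ?thesis using True by simp
  next
    case False
    have "\<exists>F. (\<forall>S::nat set. F S \<in> ?U) \<and> (\<forall>S S'::nat set. S \<noteq> S' \<longrightarrow> (\<exists>v\<in>VY. F S v \<noteq> F S' v))"
    proof (cases "semi_regular M X")
      case False
      obtain F where F1: "\<forall>S::nat set. F S \<in> ?U"
        and F2: "\<forall>S S'::nat set. S \<noteq> S' \<longrightarrow> (\<exists>v\<in>VX. F S v \<noteq> F S' v) \<and> (\<exists>v\<in>VY. F S v \<noteq> F S' v)"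
        using ct.uncountable_part[OF pM ct.pg_id[OF pN] False] by (elim exE conjE)
      show ?thesis
      proof (rule exI[of _ F], rule conjI)
        show "\<forall>S::nat set. F S \<in> ?U" by (rule F1)
        show "\<forall>S S'::nat set. S \<noteq> S' \<longrightarrow> (\<exists>v\<in>VY. F S v \<noteq> F S' v)"
        proof (intro allI impI)
          fix S S' :: "nat set" assume "S \<noteq> S'"
          then have "(\<exists>v\<in>VX. F S v \<noteq> F S' v) \<and> (\<exists>v\<in>VY. F S v \<noteq> F S' v)" using F2 by simp
          then show "\<exists>v\<in>VY. F S v \<noteq> F S' v" by (rule conjunct2)
        qed
      qed
    next
      case True
      then have ns: "\<not> semi_regular N Y" using False by simp
      interpret sw: ctree Y X V VY VX adj c
        by (unfold_locales) (use A legal_swap in auto)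
      obtain F where F1: "\<forall>S::nat set. F S \<in> U_c V adj VY VX c N M"
        and F2: "\<forall>S S'::nat set. S \<noteq> S' \<longrightarrow> (\<exists>v\<in>VY. F S v \<noteq> F S' v) \<and> (\<exists>v\<in>VX. F S v \<noteq> F S' v)"
        using sw.uncountable_part[OF pN ct.pg_id[OF pM] ns] by (elim exE conjE)
      have UU: "U_c V adj VY VX c N M = ?U" using Uc_swap[OF A(10)] by simp
      show ?thesis
      proof (rule exI[of _ F], rule conjI)
        show "\<forall>S::nat set. F S \<in> ?U" using F1 UU by simp
        show "\<forall>S S'::nat set. S \<noteq> S' \<longrightarrow> (\<exists>v\<in>VY. F S v \<noteq> F S' v)"
        proof (intro allI impI)
          fix S S' :: "nat set" assume "S \<noteq> S'"
          then have "(\<exists>v\<in>VY. F S v \<noteq> F S' v) \<and> (\<exists>v\<in>VX. F S v \<noteq> F S' v)" using F2 by simp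
          then show "\<exists>v\<in>VY. F S v \<noteq> F S' v" by (rule conjunct1)
        qed
      qed
    qed
    then obtain F where F1': "\<forall>S::nat set. F S \<in> ?U"
      and F2': "\<forall>S S'::nat set. S \<noteq> S' \<longrightarrow> (\<exists>v\<in>VY. F S v \<noteq> F S' v)" by (elim exE conjE)
    have F: "\<And>S::nat set. F S \<in> ?U" "\<And>S S'::nat set. S \<noteq> S' \<Longrightarrow> \<exists>v\<in>VY. F S v \<noteq> F S' v"
      using F1' F2' by simp_all
    have lo: "(UNIV :: nat set set) \<lesssim> ?B"
      unfolding lepoll_def
    proof (intro exI[of _ "\<lambda>S. rs (F S)"] conjI)
      show "inj_on (\<lambda>S. rs (F S)) UNIV"
      proof (rule inj_onI, rule ccontr)
        fix S S' :: "nat set" assume e: "rs (F S) = rs (F S')" and ne: "S \<noteq> S'"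
        obtain v where v: "v \<in> VY" "F S v \<noteq> F S' v" using F(2)[OF ne] by blast
        have "rs (F S) v = rs (F S') v" using e by simp
        then show False using v unfolding rs_def by simp
      qed
      show "(\<lambda>S. rs (F S)) ` UNIV \<subseteq> ?B" using F(1) B by blast
    qed
    have cV: "countable V" using ct.countable_V A(2,3) by blast
    then have "countable (V \<times> V)" by simp
    then obtain e :: "'v \<times> 'v \<Rightarrow> nat" where e: "inj_on e (V \<times> V)" unfolding countable_def by blast
    have up: "?B \<lesssim> (UNIV :: nat set set)"
      unfolding lepoll_def
    proof (intro exI[of _ "\<lambda>b. e ` {(v, b v) | v. v \<in> V}"] conjI)
      show "inj_on (\<lambda>b. e ` {(v, b v) | v. v \<in> V}) ?B"
      proof (rule inj_onI)
        fix b1 b2 assume b1: "b1 \<in> ?B" and b2: "b2 \<in> ?B"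
          and eq: "e ` {(v, b1 v) | v. v \<in> V} = e ` {(v, b2 v) | v. v \<in> V}"
        have bV: "b v \<in> V" if "b \<in> ?B" "v \<in> V" for b v
        proof -
          have "b \<in> rs ` ?U" using that(1) B by simp
          then obtain g where g: "g \<in> ?U" "b = rs g" by blast
          have "g permutes V" using ct.Uc_D(2)[OF g(1)] .
          then have "g v \<in> V" using permutes_in_image[OF \<open>g permutes V\<close>] that(2) by simp
          then show ?thesis using g(2) that(2) unfolding rs_def by simp
        qed
        have bo: "b v = v" if "b \<in> ?B" "v \<notin> V" for b v
        proof -
          have "b \<in> rs ` ?U" using that(1) B by simp
          then obtain g where g: "g \<in> ?U" "b = rs g" by blast
          have "v \<notin> VY" using that(2) ct.VU by blast
          then show ?thesis using g(2) unfolding rs_def by simp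
        qed
        have s1: "{(v, b1 v) | v. v \<in> V} \<subseteq> V \<times> V" using bV[OF b1] by blast
        have s2: "{(v, b2 v) | v. v \<in> V} \<subseteq> V \<times> V" using bV[OF b2] by blast
        have GE: "{(v, b1 v) | v. v \<in> V} = {(v, b2 v) | v. v \<in> V}"
          using inj_on_image_eq_iff[OF e s1 s2] eq by simp
        have bb: "b1 v = b2 v" if "v \<in> V" for v
        proof -
          have "(v, b1 v) \<in> {(v, b1 v) | v. v \<in> V}" using that by blast
          then have "(v, b1 v) \<in> {(v, b2 v) | v. v \<in> V}" unfolding GE .
          then show ?thesis by auto
        qed
        show "b1 = b2"
        proof (rule ext)
          fix v show "b1 v = b2 v"
          proof (cases "v \<in> V")
            case True then show ?thesis by (rule bb)
          next
            case False then show ?thesis using bo[OF b1 False] bo[OF b2 False] by simp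
          qed
        qed
      qed
    qed simp
    have eq: "?B \<approx> (UNIV :: nat set set)" using lepoll_antisym[OF up lo] .
    have nc: "\<not> countable ?B"
    proof
      assume "countable ?B"
      then have "countable (UNIV :: nat set set)" using countable_lepoll lo by blast
      then show False using uncountable_nat_set_set by blast
    qed
    show ?thesis using eq nc False by blast
  qed
qed

end
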